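(* Let $\alpha\in(0,1)$. For $\mu\in[0,\infty]$ let $f_\mu:\mathcal X\times\mathcal Y\to\{0,1\}$ and $g_\mu:\mathcal X\to\{0,1\}$ be (measurable) indicator functions such that for every $(x,y)\in\mathcal X\times\mathcal Y$: (1) $\mu\mapsto f_\mu(x,y)$ is non-increasing on $[0,\infty)$ and $f_\mu(x,y)\le g_\mu(x)$ for all $\mu\in[0,\infty)$; (2) $\mu\mapsto f_\mu(x,y)$ and $\mu\mapsto g_\mu(x)$ are right-continuous on $[0,\infty)$; (3) $f_\infty(x,y)=g_\infty(x)=0$. Let $(X_i,Y_i)_{i=1}^{n+m}$ be i.i.d. with common distribution $P_{XY}$. Define $$\mu_\alpha=\min\left\{\mu\ge 0:\ \frac{\frac{1}{n+1}\left(\sum_{i=1}^n f_\mu(X_i,Y_i)+1\right)}{\frac1m\left(1\vee\sum_{i=1}^m g_\mu(X_{n+i})\right)}\le\alpha\right\},$$ or $\mu_\alpha=\infty$ if no such $\mu$ exists. Then $$\mathbb E\left[\frac{\sum_{i=1}^m f_{\mu_\alpha}(X_{n+i},Y_{n+i})}{1\vee\sum_{i=1}^m g_{\mu_\alpha}(X_{n+i})}\right]\le\alpha.$$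
   Context: $a\vee b=\max(a,b)$. *)

theory Defs
  imports "HOL-Probability.Probability"
begin

text \<open>Indices are 0-based: calibration points are 0..n-1, test points are n..n+m-1.
  The parameter mu ranges over [0,\<infinity>], represented by ennreal.\<close>

definition FDP_hat ::
  "nat \<Rightarrow> nat \<Rightarrow> (ennreal \<Rightarrow> 'x \<Rightarrow> 'y \<Rightarrow> real) \<Rightarrow> (ennreal \<Rightarrow> 'x \<Rightarrow> real)
     \<Rightarrow> (nat \<Rightarrow> 'x) \<Rightarrow> (nat \<Rightarrow> 'y) \<Rightarrow> ennreal \<Rightarrow> real" where
  "FDP_hat n m f g xs ys \<mu> =
     ((1 / real (n + 1)) * ((\<Sum>i<n. f \<mu> (xs i) (ys i)) + 1)) /
     ((1 / real m) * max 1 (\<Sum>i<m. g \<mu> (xs (n + i))))"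

text \<open>mu_alpha: the least finite mu with FDP_hat <= alpha; \<infinity> if none (Inf of empty set).\<close>
definition mu_alpha ::
  "real \<Rightarrow> nat \<Rightarrow> nat \<Rightarrow> (ennreal \<Rightarrow> 'x \<Rightarrow> 'y \<Rightarrow> real) \<Rightarrow> (ennreal \<Rightarrow> 'x \<Rightarrow> real)
     \<Rightarrow> (nat \<Rightarrow> 'x) \<Rightarrow> (nat \<Rightarrow> 'y) \<Rightarrow> ennreal" where
  "mu_alpha \<alpha> n m f g xs ys = Inf {\<mu>. \<mu> < \<infinity> \<and> FDP_hat n m f g xs ys \<mu> \<le> \<alpha>}"

end

theory Submission
  imports Defs
begin


lemma loc_const:
  fixes h :: "ennreal \<Rightarrow> real"
  assumes "\<And>\<nu>. h \<nu> \<in> {0,1}" "(h \<longlongrightarrow> h \<mu>) (at_right \<mu>)"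
  shows "eventually (\<lambda>\<nu>. h \<nu> = h \<mu>) (at_right \<mu>)"
proof -
  have "eventually (\<lambda>\<nu>. dist (h \<nu>) (h \<mu>) < 1) (at_right \<mu>)"
    using assms(2) tendstoD by force
  then show ?thesis
  proof eventually_elim
    case (elim \<nu>)
    then show ?case using assms(1)[of \<nu>] assms(1)[of \<mu>] by (auto simp: dist_real_def)
  qed
qed

lemma ennreal_rat_between:
  fixes x b :: ennreal assumes "x < b" "x < \<infinity>"
  shows "\<exists>q\<in>ennreal ` \<rat>. x < q \<and> q < b"
proof -
  obtain r where r: "x = ennreal r" "0 \<le> r" using assms(2) by (cases x) auto
  show ?thesis
  proof (cases "b = \<infinity>")
    case True
    obtain q where q: "q \<in> \<rat>" "r < q" "q < r+1" using Rats_dense_in_real[of r "r+1"] by auto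
    then have "x < ennreal q" using r by (simp add: ennreal_lessI)
    then show ?thesis using q True by auto
  next
    case False
    then obtain s where s: "b = ennreal s" "0 \<le> s" by (cases b) auto
    have "r < s" using assms(1) r s by (simp add: ennreal_less_iff)
    obtain q where q: "q \<in> \<rat>" "r < q" "q < s" using Rats_dense_in_real[OF \<open>r < s\<close>] by auto
    then have "x < ennreal q" "ennreal q < b" using r s by (auto simp: ennreal_lessI)
    then show ?thesis using q by auto
  qed
qed

lemma Inf_attain:
  fixes C :: "ennreal \<Rightarrow> bool"
  assumes lc: "\<And>\<mu>. \<mu> < \<infinity> \<Longrightarrow> eventually (\<lambda>\<nu>. C \<nu> = C \<mu>) (at_right \<mu>)"
    and ne: "{\<mu>. \<mu> < \<infinity> \<and> C \<mu>} \<noteq> {}"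
  shows "C (Inf {\<mu>. \<mu> < \<infinity> \<and> C \<mu>}) \<and> Inf {\<mu>. \<mu> < \<infinity> \<and> C \<mu>} < \<infinity>"
proof -
  define S where "S = {\<mu>. \<mu> < \<infinity> \<and> C \<mu>}"
  define s where "s = Inf S"
  obtain \<mu>0 where \<mu>0: "\<mu>0 \<in> S" using ne S_def by auto
  hence "s \<le> \<mu>0" by (simp add: s_def Inf_lower)
  hence sfin: "s < \<infinity>" using \<mu>0 S_def by auto
  have "C s"
  proof (rule ccontr)
    assume nC: "\<not> C s"
    from lc[OF sfin] obtain b where b: "b > s" "\<forall>y>s. y < b \<longrightarrow> C y = C s"
      using eventually_at_right[OF sfin] by auto
    have "b \<le> s" unfolding s_def
    proof (rule Inf_greatest)
      fix \<mu> assume m: "\<mu> \<in> S"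
      hence "s \<le> \<mu>" "C \<mu>" by (auto simp: s_def Inf_lower S_def)
      hence "s < \<mu>" using nC by (metis order.not_eq_order_implies_strict)
      then show "b \<le> \<mu>" using b \<open>C \<mu>\<close> nC by (meson not_le)
    qed
    with b show False by simp
  qed
  then show ?thesis using sfin by (simp add: s_def S_def)
qed

lemma Inf_rat:
  fixes C :: "ennreal \<Rightarrow> bool"
  assumes lc: "\<And>\<mu>. \<mu> < \<infinity> \<Longrightarrow> eventually (\<lambda>\<nu>. C \<nu> = C \<mu>) (at_right \<mu>)"
  shows "Inf {\<mu>. \<mu> < \<infinity> \<and> C \<mu>} = (INF q\<in>ennreal ` \<rat>. if C q then q else \<infinity>)"
proof (rule antisym)
  show "Inf {\<mu>. \<mu> < \<infinity> \<and> C \<mu>} \<le> (INF q\<in>ennreal ` \<rat>. if C q then q else \<infinity>)"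
  proof (rule INF_greatest)
    fix q assume "q \<in> ennreal ` \<rat>"
    then have "q < \<infinity>" by auto
    then show "Inf {\<mu>. \<mu> < \<infinity> \<and> C \<mu>} \<le> (if C q then q else \<infinity>)"
      by (auto intro: Inf_lower)
  qed
  show "(INF q\<in>ennreal ` \<rat>. if C q then q else \<infinity>) \<le> Inf {\<mu>. \<mu> < \<infinity> \<and> C \<mu>}"
  proof (rule Inf_greatest)
    fix \<mu> assume "\<mu> \<in> {\<mu>. \<mu> < \<infinity> \<and> C \<mu>}"
    hence m: "\<mu> < \<infinity>" "C \<mu>" by auto
    from lc[OF m(1)] obtain b where b: "b > \<mu>" "\<forall>y>\<mu>. y < b \<longrightarrow> C y = C \<mu>"
      using eventually_at_right[OF m(1)] by auto
    show "(INF q\<in>ennreal ` \<rat>. if C q then q else \<infinity>) \<le> \<mu>"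
    proof (rule dense_ge)
      fix y assume "\<mu> < y"
      then have "\<mu> < min b y" using b by simp
      then obtain q where q: "q \<in> ennreal ` \<rat>" "\<mu> < q" "q < min b y"
        using ennreal_rat_between m by blast
      then have "C q" using b m by auto
      have "(INF q\<in>ennreal ` \<rat>. if C q then q else \<infinity>) \<le> (if C q then q else \<infinity>)"
        by (rule INF_lower[OF q(1)])
      then have "(INF q\<in>ennreal ` \<rat>. if C q then q else \<infinity>) \<le> q"
        using \<open>C q\<close> by simp
      then show "(INF q\<in>ennreal ` \<rat>. if C q then q else \<infinity>) \<le> y" using q by auto
    qed
  qed
qed



definition Cj :: "real \<Rightarrow> nat \<Rightarrow> nat \<Rightarrow> (ennreal \<Rightarrow> 'x \<Rightarrow> 'y \<Rightarrow> real) \<Rightarrow> (ennreal \<Rightarrow> 'x \<Rightarrow> real)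
     \<Rightarrow> nat \<Rightarrow> (nat \<Rightarrow> 'x \<times> 'y) \<Rightarrow> ennreal \<Rightarrow> bool" where
  "Cj \<alpha> n m f g j z \<mu> \<longleftrightarrow>
     ((1 / real (n + 1)) * (\<Sum>k\<in>insert (n+j) {..<n}. f \<mu> (fst (z k)) (snd (z k)))) /
     ((1 / real m) * max 1 ((\<Sum>i\<in>{..<m}-{j}. g \<mu> (fst (z (n + i)))) + 1)) \<le> \<alpha>"

definition muj where
  "muj \<alpha> n m f g j z = Inf {\<mu>. \<mu> < \<infinity> \<and> Cj \<alpha> n m f g j z \<mu>}"

definition Psi where
  "Psi \<alpha> n m f g j k z =
     f (muj \<alpha> n m f g j z) (fst (z k)) (snd (z k)) /
     (\<Sum>l\<in>insert (n+j) {..<n}. f (muj \<alpha> n m f g j z) (fst (z l)) (snd (z l)))"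

locale setting =
  fixes MX :: "'x measure" and MY :: "'y measure"
    and f :: "ennreal \<Rightarrow> 'x \<Rightarrow> 'y \<Rightarrow> real" and g :: "ennreal \<Rightarrow> 'x \<Rightarrow> real"
    and \<alpha> :: real and n m :: nat
  assumes alpha_pos: "0 < \<alpha>" and m_pos: "0 < m"
    and f_ind: "\<And>\<mu> x y. x \<in> space MX \<Longrightarrow> y \<in> space MY \<Longrightarrow> f \<mu> x y \<in> {0, 1}"
    and g_ind: "\<And>\<mu> x. x \<in> space MX \<Longrightarrow> g \<mu> x \<in> {0, 1}"
    and f_mono: "\<And>\<mu> \<nu> x y. x \<in> space MX \<Longrightarrow> y \<in> space MY \<Longrightarrow> \<mu> \<le> \<nu> \<Longrightarrow> \<nu> < \<infinity>
                  \<Longrightarrow> f \<nu> x y \<le> f \<mu> x y"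
    and f_le_g: "\<And>\<mu> x y. x \<in> space MX \<Longrightarrow> y \<in> space MY \<Longrightarrow> \<mu> < \<infinity> \<Longrightarrow> f \<mu> x y \<le> g \<mu> x"
    and f_rcont: "\<And>\<mu> x y. x \<in> space MX \<Longrightarrow> y \<in> space MY \<Longrightarrow> \<mu> < \<infinity>
                  \<Longrightarrow> ((\<lambda>\<nu>. f \<nu> x y) \<longlongrightarrow> f \<mu> x y) (at_right \<mu>)"
    and g_rcont: "\<And>\<mu> x. x \<in> space MX \<Longrightarrow> \<mu> < \<infinity>
                  \<Longrightarrow> ((\<lambda>\<nu>. g \<nu> x) \<longlongrightarrow> g \<mu> x) (at_right \<mu>)"
    and f_inf: "\<And>x y. x \<in> space MX \<Longrightarrow> y \<in> space MY \<Longrightarrow> f \<infinity> x y = 0"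
    and g_inf: "\<And>x. x \<in> space MX \<Longrightarrow> g \<infinity> x = 0"
begin

lemma f_ev: "x \<in> space MX \<Longrightarrow> y \<in> space MY \<Longrightarrow> \<mu> < \<infinity> \<Longrightarrow>
   eventually (\<lambda>\<nu>. f \<nu> x y = f \<mu> x y) (at_right \<mu>)"
  using f_ind[of x y] f_rcont[of x y \<mu>] by (intro loc_const) auto

lemma g_ev: "x \<in> space MX \<Longrightarrow> \<mu> < \<infinity> \<Longrightarrow>
   eventually (\<lambda>\<nu>. g \<nu> x = g \<mu> x) (at_right \<mu>)"
  using g_ind[of x] g_rcont[of x \<mu>] by (intro loc_const) auto

lemma f_nonneg: "x \<in> space MX \<Longrightarrow> y \<in> space MY \<Longrightarrow> 0 \<le> f \<mu> x y"
  using f_ind[of x y \<mu>] by auto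

lemma Cj_lc:
  assumes z: "\<And>i. i < n + m \<Longrightarrow> fst (z i) \<in> space MX \<and> snd (z i) \<in> space MY"
    and j: "j < m" and mu: "\<mu> < \<infinity>"
  shows "eventually (\<lambda>\<nu>. Cj \<alpha> n m f g j z \<nu> = Cj \<alpha> n m f g j z \<mu>) (at_right \<mu>)"
proof -
  have A: "eventually (\<lambda>\<nu>. \<forall>k\<in>insert (n+j) {..<n}. f \<nu> (fst (z k)) (snd (z k)) = f \<mu> (fst (z k)) (snd (z k))) (at_right \<mu>)"
    by (rule eventually_ball_finite) (use z j mu in \<open>auto intro!: f_ev\<close>)
  have B: "eventually (\<lambda>\<nu>. \<forall>i\<in>{..<m}-{j}. g \<nu> (fst (z (n+i))) = g \<mu> (fst (z (n+i)))) (at_right \<mu>)"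
    by (rule eventually_ball_finite) (use z j mu in \<open>auto intro!: g_ev\<close>)
  from A B show ?thesis
  proof eventually_elim
    case (elim \<nu>)
    then have "(\<Sum>k\<in>insert (n+j) {..<n}. f \<nu> (fst (z k)) (snd (z k))) = (\<Sum>k\<in>insert (n+j) {..<n}. f \<mu> (fst (z k)) (snd (z k)))"
      "(\<Sum>i\<in>{..<m}-{j}. g \<nu> (fst (z (n+i)))) = (\<Sum>i\<in>{..<m}-{j}. g \<mu> (fst (z (n+i))))"
      by (auto intro!: sum.cong simp del: insert_iff)
    then show ?case by (simp add: Cj_def)
  qed
qed

lemma FDP_lc:
  assumes xs: "\<And>i. i < n + m \<Longrightarrow> xs i \<in> space MX" and ys: "\<And>i. i < n + m \<Longrightarrow> ys i \<in> space MY"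
    and mu: "\<mu> < \<infinity>"
  shows "eventually (\<lambda>\<nu>. (FDP_hat n m f g xs ys \<nu> \<le> \<alpha>) = (FDP_hat n m f g xs ys \<mu> \<le> \<alpha>)) (at_right \<mu>)"
proof -
  have A: "eventually (\<lambda>\<nu>. \<forall>k\<in>{..<n}. f \<nu> (xs k) (ys k) = f \<mu> (xs k) (ys k)) (at_right \<mu>)"
    by (rule eventually_ball_finite) (use xs ys mu in \<open>auto intro!: f_ev\<close>)
  have B: "eventually (\<lambda>\<nu>. \<forall>i\<in>{..<m}. g \<nu> (xs (n+i)) = g \<mu> (xs (n+i))) (at_right \<mu>)"
    by (rule eventually_ball_finite) (use xs mu in \<open>auto intro!: g_ev\<close>)
  from A B show ?thesis
  proof eventually_elim
    case (elim \<nu>)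
    then have "(\<Sum>k<n. f \<nu> (xs k) (ys k)) = (\<Sum>k<n. f \<mu> (xs k) (ys k))"
      "(\<Sum>i<m. g \<nu> (xs (n+i))) = (\<Sum>i<m. g \<mu> (xs (n+i)))"
      by (auto intro!: sum.cong)
    then show ?case by (simp add: FDP_hat_def)
  qed
qed

end


lemma arith_key:
  fixes S B a :: real and n m :: nat
  assumes "0 \<le> S" "1 \<le> B" "0 < m"
    and "((1 / real (n + 1)) * (S + 1)) / ((1 / real m) * B) \<le> a"
  shows "1 / B \<le> a * real (n + 1) / real m * (1 / (S + 1))"
proof -
  have pos: "0 < S + 1" "0 < B" "0 < real m" "0 < real (n+1)" using assms by auto
  have "((1 / real (n + 1)) * (S + 1)) / ((1 / real m) * B) = (S+1) * real m / (real (n+1) * B)"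
    using pos by (simp add: field_simps)
  with assms(4) have "(S+1) * real m \<le> a * (real (n+1) * B)"
    using pos by (simp add: pos_divide_le_eq)
  then have "1 \<le> (a * (real (n+1) * B)) / ((S+1) * real m)"
    using pos by (simp add: le_divide_eq)
  then have "1 / B \<le> (a * (real (n+1) * B)) / ((S+1) * real m) / B"
    using pos by (intro divide_right_mono) auto
  also have "\<dots> = a * real (n + 1) / real m * (1 / (S + 1))"
    using pos by (simp add: divide_simps ac_simps)
  finally show ?thesis .
qed

context setting begin

lemma pointwise:
  assumes xs: "\<And>i. i < n + m \<Longrightarrow> xs i \<in> space MX" and ys: "\<And>i. i < n + m \<Longrightarrow> ys i \<in> space MY"
    and j: "j < m"
  shows "f (mu_alpha \<alpha> n m f g xs ys) (xs (n+j)) (ys (n+j)) / max 1 (\<Sum>i<m. g (mu_alpha \<alpha> n m f g xs ys) (xs (n+i)))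
     \<le> \<alpha> * real (n+1) / real m * Psi \<alpha> n m f g j (n+j) (\<lambda>i. (xs i, ys i))"
proof -
  define z where "z = (\<lambda>i. (xs i, ys i))"
  define mh where "mh = mu_alpha \<alpha> n m f g xs ys"
  define mj where "mj = muj \<alpha> n m f g j z"
  have zs: "\<And>i. i < n + m \<Longrightarrow> fst (z i) \<in> space MX \<and> snd (z i) \<in> space MY"
    using xs ys by (simp add: z_def)
  have jI: "n + j < n + m" using j by simp
  have psi_nn: "0 \<le> Psi \<alpha> n m f g j (n+j) z"
    unfolding Psi_def using zs j
    by (intro divide_nonneg_nonneg sum_nonneg f_nonneg) auto
  have s2: "\<And>\<mu>. (\<Sum>k\<in>insert (n+j) {..<n}. f \<mu> (fst (z k)) (snd (z k))) = (\<Sum>k<n. f \<mu> (xs k) (ys k)) + f \<mu> (xs (n+j)) (ys (n+j))"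
    by (simp add: z_def)
  have key: "(FDP_hat n m f g xs ys \<mu> \<le> \<alpha>) = Cj \<alpha> n m f g j z \<mu>"
    if mu: "\<mu> < \<infinity>" and f1: "f \<mu> (xs (n+j)) (ys (n+j)) = 1" for \<mu>
  proof -
    have "1 \<le> g \<mu> (xs (n+j))" using f_le_g[OF xs[OF jI] ys[OF jI] mu] f1 by simp
    hence g1: "g \<mu> (xs (n+j)) = 1" using g_ind[OF xs[OF jI], of \<mu>] by auto
    have s1: "(\<Sum>i<m. g \<mu> (xs (n+i))) = (\<Sum>i\<in>{..<m}-{j}. g \<mu> (xs (n+i))) + 1"
      using sum.remove[of "{..<m}" j "\<lambda>i. g \<mu> (xs (n+i))"] j g1 by simp
    show ?thesis unfolding FDP_hat_def Cj_def s1 s2 f1 by (simp add: z_def)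
  qed
  show ?thesis
  proof (cases "f mh (xs (n+j)) (ys (n+j)) = 1")
    case False
    then have "f mh (xs (n+j)) (ys (n+j)) = 0" using f_ind[OF xs[OF jI] ys[OF jI], of mh] by auto
    then show ?thesis using psi_nn alpha_pos by (simp add: mh_def z_def)
  next
    case True
    have mhfin: "mh < \<infinity>"
    proof (rule ccontr)
      assume "\<not> mh < \<infinity>"
      then have "mh = \<infinity>" by (cases mh) auto
      then show False using True f_inf[OF xs[OF jI] ys[OF jI]] by simp
    qed
    let ?C = "\<lambda>\<mu>. FDP_hat n m f g xs ys \<mu> \<le> \<alpha>"
    have ne: "{\<mu>. \<mu> < \<infinity> \<and> ?C \<mu>} \<noteq> {}"
    proof
      assume E: "{\<mu>. \<mu> < \<infinity> \<and> ?C \<mu>} = {}"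
      have "mh = \<infinity>" unfolding mh_def mu_alpha_def E by simp
      then show False using mhfin by simp
    qed
    have Cmh: "?C mh"
      using Inf_attain[of ?C, OF FDP_lc[OF xs ys] ne] by (simp add: mh_def mu_alpha_def)
    have "Cj \<alpha> n m f g j z mh" using key[OF mhfin True] Cmh by simp
    hence "mj \<le> mh" unfolding mj_def muj_def using mhfin by (intro Inf_lower) simp
    hence mjfin: "mj < \<infinity>" using mhfin by auto
    have nej: "{\<mu>. \<mu> < \<infinity> \<and> Cj \<alpha> n m f g j z \<mu>} \<noteq> {}"
      using \<open>Cj \<alpha> n m f g j z mh\<close> mhfin by auto
    have Cmj: "Cj \<alpha> n m f g j z mj"
      using Inf_attain[of "Cj \<alpha> n m f g j z", OF Cj_lc[OF zs j] nej] by (simp add: mj_def muj_def)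
    have "f mh (xs (n+j)) (ys (n+j)) \<le> f mj (xs (n+j)) (ys (n+j))"
      using f_mono[OF xs[OF jI] ys[OF jI] \<open>mj \<le> mh\<close> mhfin] .
    hence fmj: "f mj (xs (n+j)) (ys (n+j)) = 1" using True f_ind[OF xs[OF jI] ys[OF jI], of mj] by auto
    have "?C mj" using key[OF mjfin fmj] Cmj by simp
    hence "mh \<le> mj" unfolding mh_def mu_alpha_def using mjfin by (intro Inf_lower) simp
    hence eq: "mj = mh" using \<open>mj \<le> mh\<close> by simp
    have psi: "Psi \<alpha> n m f g j (n+j) z = 1 / ((\<Sum>k<n. f mh (xs k) (ys k)) + 1)"
      unfolding Psi_def mj_def[symmetric] eq s2 using True by (simp add: z_def)
    have Snn: "0 \<le> (\<Sum>k<n. f mh (xs k) (ys k))"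
      using xs ys by (intro sum_nonneg f_nonneg) auto
    have "1 / max 1 (\<Sum>i<m. g mh (xs (n+i))) \<le> \<alpha> * real (n+1) / real m * (1 / ((\<Sum>k<n. f mh (xs k) (ys k)) + 1))"
      by (rule arith_key[OF Snn _ m_pos]) (use Cmh in \<open>simp_all add: FDP_hat_def\<close>)
    then show ?thesis using True psi by (simp add: mh_def z_def)
  qed
qed

end


definition eq_r :: "rat \<Rightarrow> ennreal" where "eq_r r = ennreal (of_rat r)"

lemma INF_rat_conv: "(INF q\<in>ennreal ` \<rat>. F q) = (INF r. F (eq_r r))"
  by (simp add: Rats_def image_image eq_r_def)

lemma Bex_rat_conv: "(\<exists>q\<in>ennreal ` \<rat>. P q) = (\<exists>r. P (eq_r r))"
  by (auto simp add: Rats_def eq_r_def)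

context setting begin

definition muD where
  "muD j z = (INF r. if Cj \<alpha> n m f g j z (eq_r r) then eq_r r else \<infinity>)"

definition fD where
  "fD \<mu> x y = (if \<exists>r. \<mu> < eq_r r \<and> f (eq_r r) x y = 1 then 1 else (0::real))"

lemma muj_muD:
  assumes z: "\<And>i. i < n + m \<Longrightarrow> fst (z i) \<in> space MX \<and> snd (z i) \<in> space MY" and j: "j < m"
  shows "muj \<alpha> n m f g j z = muD j z"
  unfolding muj_def muD_def using Inf_rat[OF Cj_lc[OF z j]] by (simp only: INF_rat_conv)

lemma f_fD:
  assumes x: "x \<in> space MX" and y: "y \<in> space MY"
  shows "f \<mu> x y = fD \<mu> x y"
proof (cases "\<mu> < \<infinity>")
  case False
  then have "\<mu> = \<infinity>" by (cases \<mu>) auto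
  then show ?thesis using f_inf[OF x y] by (simp add: fD_def)
next
  case True
  show ?thesis
  proof (cases "f \<mu> x y = 1")
    case T1: True
    from f_ev[OF x y True] obtain b where b: "b > \<mu>" "\<forall>\<nu>>\<mu>. \<nu> < b \<longrightarrow> f \<nu> x y = f \<mu> x y"
      using eventually_at_right[OF True] by auto
    obtain q where q: "q \<in> ennreal ` \<rat>" "\<mu> < q" "q < b" using ennreal_rat_between[OF b(1) True] by auto
    then have "\<exists>q\<in>ennreal ` \<rat>. \<mu> < q \<and> f q x y = 1" using b T1 by auto
    then show ?thesis using T1 unfolding fD_def Bex_rat_conv by auto
  next
    case F1: False
    then have f0: "f \<mu> x y = 0" using f_ind[OF x y, of \<mu>] by auto
    have "\<not> (\<mu> < eq_r r \<and> f (eq_r r) x y = 1)" for r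
    proof
      assume a: "\<mu> < eq_r r \<and> f (eq_r r) x y = 1"
      have "f (eq_r r) x y \<le> f \<mu> x y"
        by (rule f_mono[OF x y]) (use a in \<open>auto simp: eq_r_def\<close>)
      then show False using a f0 by simp
    qed
    then show ?thesis using f0 unfolding fD_def by auto
  qed
qed

lemma Cj_swap:
  assumes k: "k < n" and j: "j < m"
  defines "\<sigma> \<equiv> (\<lambda>i. if i = k then n + j else if i = n + j then k else i)"
  shows "Cj \<alpha> n m f g j (\<lambda>i\<in>{..<n+m}. z (\<sigma> i)) \<mu> = Cj \<alpha> n m f g j z \<mu>"
    and "muj \<alpha> n m f g j (\<lambda>i\<in>{..<n+m}. z (\<sigma> i)) = muj \<alpha> n m f g j z"
    and "Psi \<alpha> n m f g j (n+j) (\<lambda>i\<in>{..<n+m}. z (\<sigma> i)) = Psi \<alpha> n m f g j k z"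
proof -
  let ?T = "insert (n+j) {..<n}"
  have bij: "bij_betw \<sigma> ?T ?T"
    by (rule bij_betw_byWitness[of _ \<sigma>]) (use k in \<open>auto simp: \<sigma>_def\<close>)
  have sumT: "(\<Sum>l\<in>?T. F ((\<lambda>i\<in>{..<n+m}. z (\<sigma> i)) l)) = (\<Sum>l\<in>?T. F (z l))" for F :: "_ \<Rightarrow> real"
  proof -
    have "(\<Sum>l\<in>?T. F ((\<lambda>i\<in>{..<n+m}. z (\<sigma> i)) l)) = (\<Sum>l\<in>?T. F (z (\<sigma> l)))"
      using j by (intro sum.cong) auto
    also have "\<dots> = (\<Sum>l\<in>?T. F (z l))"
      by (rule sum.reindex_bij_betw[OF bij])
    finally show ?thesis .
  qed
  have sumG: "(\<Sum>i\<in>{..<m}-{j}. G ((\<lambda>i\<in>{..<n+m}. z (\<sigma> i)) (n+i))) = (\<Sum>i\<in>{..<m}-{j}. G (z (n+i)))" for G :: "_ \<Rightarrow> real"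
    using k by (intro sum.cong) (auto simp: \<sigma>_def)
  show C: "Cj \<alpha> n m f g j (\<lambda>i\<in>{..<n+m}. z (\<sigma> i)) \<mu> = Cj \<alpha> n m f g j z \<mu>" for \<mu>
    unfolding Cj_def
    using sumT[of "\<lambda>w. f \<mu> (fst w) (snd w)"] sumG[of "\<lambda>w. g \<mu> (fst w)"] by simp
  show M: "muj \<alpha> n m f g j (\<lambda>i\<in>{..<n+m}. z (\<sigma> i)) = muj \<alpha> n m f g j z"
    unfolding muj_def C ..
  have "(\<lambda>i\<in>{..<n+m}. z (\<sigma> i)) (n+j) = z k" using j by (simp add: \<sigma>_def)
  then show "Psi \<alpha> n m f g j (n+j) (\<lambda>i\<in>{..<n+m}. z (\<sigma> i)) = Psi \<alpha> n m f g j k z"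
    unfolding Psi_def M
    using sumT[of "\<lambda>w. f (muj \<alpha> n m f g j z) (fst w) (snd w)"] by simp
qed

lemma Psi_cong:
  assumes "\<And>i. i < n + m \<Longrightarrow> z i = z' i" and j: "j < m" and k: "k < n + m"
  shows "Psi \<alpha> n m f g j k z = Psi \<alpha> n m f g j k z'"
proof -
  have C: "Cj \<alpha> n m f g j z \<mu> = Cj \<alpha> n m f g j z' \<mu>" for \<mu>
  proof -
    have "(\<Sum>l\<in>insert (n+j) {..<n}. f \<mu> (fst (z l)) (snd (z l))) = (\<Sum>l\<in>insert (n+j) {..<n}. f \<mu> (fst (z' l)) (snd (z' l)))"
      using assms by (intro sum.cong) auto
    moreover have "(\<Sum>i\<in>{..<m}-{j}. g \<mu> (fst (z (n+i)))) = (\<Sum>i\<in>{..<m}-{j}. g \<mu> (fst (z' (n+i))))"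
      using assms by (intro sum.cong) auto
    ultimately show ?thesis unfolding Cj_def by simp
  qed
  have M: "muj \<alpha> n m f g j z = muj \<alpha> n m f g j z'" unfolding muj_def C ..
  have "(\<Sum>l\<in>insert (n+j) {..<n}. f (muj \<alpha> n m f g j z') (fst (z l)) (snd (z l))) = (\<Sum>l\<in>insert (n+j) {..<n}. f (muj \<alpha> n m f g j z') (fst (z' l)) (snd (z' l)))"
    using assms by (intro sum.cong) auto
  then show ?thesis unfolding Psi_def M using assms k by simp
qed

lemma Psi_sum_le: "(\<Sum>k\<in>insert (n+j) {..<n}. Psi \<alpha> n m f g j k z) \<le> 1"
  unfolding Psi_def sum_divide_distrib[symmetric]
  by (cases "(\<Sum>l\<in>insert (n+j) {..<n}. f (muj \<alpha> n m f g j z) (fst (z l)) (snd (z l))) = 0") auto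

lemma Psi_bound:
  assumes z: "\<And>i. i < n + m \<Longrightarrow> fst (z i) \<in> space MX \<and> snd (z i) \<in> space MY"
    and j: "j < m" and k: "k \<in> insert (n+j) {..<n}"
  shows "0 \<le> Psi \<alpha> n m f g j k z \<and> Psi \<alpha> n m f g j k z \<le> 1"
proof -
  let ?F = "\<lambda>l. f (muj \<alpha> n m f g j z) (fst (z l)) (snd (z l))"
  have nn: "\<And>l. l \<in> insert (n+j) {..<n} \<Longrightarrow> 0 \<le> ?F l" using z j by (auto intro!: f_nonneg)
  have "?F k \<le> (\<Sum>l\<in>insert (n+j) {..<n}. ?F l)"
    by (rule member_le_sum[OF k]) (use nn in auto)
  then show ?thesis unfolding Psi_def using nn[OF k]
    by (auto intro: divide_nonneg_nonneg sum_nonneg nn divide_le_eq_1_pos[THEN iffD2] simp: divide_le_eq_1)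
qed

end


context setting begin

lemma Psi_meas:
  assumes f_meas: "\<And>\<mu>. (\<lambda>(x, y). f \<mu> x y) \<in> borel_measurable (MX \<Otimes>\<^sub>M MY)"
    and g_meas: "\<And>\<mu>. g \<mu> \<in> borel_measurable MX"
    and j: "j < m" and k: "k < n + m"
  shows "Psi \<alpha> n m f g j k \<in> borel_measurable (Pi\<^sub>M {..<n+m} (\<lambda>_. MX \<Otimes>\<^sub>M MY))"
proof -
  let ?PN = "Pi\<^sub>M {..<n+m} (\<lambda>_. MX \<Otimes>\<^sub>M MY)"
  have sp: "\<And>z i. z \<in> space ?PN \<Longrightarrow> i < n+m \<Longrightarrow> fst (z i) \<in> space MX \<and> snd (z i) \<in> space MY"
    by (auto simp: space_PiM space_pair_measure PiE_iff mem_Times_iff)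
  have fk: "(\<lambda>z. f q (fst (z l)) (snd (z l))) \<in> borel_measurable ?PN" if l: "l < n+m" for q l
  proof -
    have "(\<lambda>z. (\<lambda>(x,y). f q x y) (z l)) \<in> borel_measurable ?PN"
      by (rule measurable_compose[OF measurable_component_singleton[where M="\<lambda>_. MX \<Otimes>\<^sub>M MY"] f_meas]) (use l in auto)
    then show ?thesis by (simp add: split_beta)
  qed
  have gk: "(\<lambda>z. g q (fst (z l))) \<in> borel_measurable ?PN" if l: "l < n+m" for q l
    by (rule measurable_compose[OF measurable_compose[OF measurable_component_singleton[where M="\<lambda>_. MX \<Otimes>\<^sub>M MY"] measurable_fst] g_meas])
      (use l in auto)
  have Em: "(\<lambda>z. ((1 / real (n + 1)) * (\<Sum>k\<in>insert (n+j) {..<n}. f q (fst (z k)) (snd (z k)))) /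
     ((1 / real m) * max 1 ((\<Sum>i\<in>{..<m}-{j}. g q (fst (z (n + i)))) + 1))) \<in> borel_measurable ?PN" for q
    by (intro borel_measurable_divide borel_measurable_times borel_measurable_const borel_measurable_max
        borel_measurable_add borel_measurable_sum fk gk) (use j in auto)
  have Cm: "{z \<in> space ?PN. Cj \<alpha> n m f g j z q} \<in> sets ?PN" for q
    using pred_le_const[OF Em[of q], of \<alpha>] unfolding Cj_def pred_def by simp
  have muDm: "muD j \<in> borel_measurable ?PN"
    unfolding muD_def
    by (intro borel_measurable_INF measurable_If Cm) auto
  have Fm: "(\<lambda>z. fD (muD j z) (fst (z l)) (snd (z l))) \<in> borel_measurable ?PN" if l: "l < n+m" for l
  proof -
    have S1: "{z\<in>space ?PN. muD j z < eq_r r} \<in> sets ?PN" for r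
      using borel_measurable_less[OF muDm borel_measurable_const] .
    have S2: "{z\<in>space ?PN. f (eq_r r) (fst (z l)) (snd (z l)) = 1} \<in> sets ?PN" for r
      using borel_measurable_eq[OF fk[OF l] borel_measurable_const] .
    have "{z\<in>space ?PN. \<exists>r. muD j z < eq_r r \<and> f (eq_r r) (fst (z l)) (snd (z l)) = 1}
       = (\<Union>r. {z\<in>space ?PN. muD j z < eq_r r} \<inter> {z\<in>space ?PN. f (eq_r r) (fst (z l)) (snd (z l)) = 1})"
      by auto
    also have "\<dots> \<in> sets ?PN"
      using S1 S2 by (intro sets.countable_UN) (auto intro!: sets.Int)
    finally have P: "{z\<in>space ?PN. \<exists>r. muD j z < eq_r r \<and> f (eq_r r) (fst (z l)) (snd (z l)) = 1} \<in> sets ?PN" .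
    show ?thesis unfolding fD_def
      by (rule measurable_If[OF borel_measurable_const borel_measurable_const P])
  qed
  have A: "(\<lambda>z. fD (muD j z) (fst (z k)) (snd (z k)) / (\<Sum>l\<in>insert (n+j) {..<n}. fD (muD j z) (fst (z l)) (snd (z l))))
     \<in> borel_measurable ?PN"
    by (intro borel_measurable_divide borel_measurable_sum Fm) (use j k in auto)
  have B: "Psi \<alpha> n m f g j k z = fD (muD j z) (fst (z k)) (snd (z k)) / (\<Sum>l\<in>insert (n+j) {..<n}. fD (muD j z) (fst (z l)) (snd (z l)))"
    if z: "z \<in> space ?PN" for z
  proof -
    have zz: "\<And>i. i < n + m \<Longrightarrow> fst (z i) \<in> space MX \<and> snd (z i) \<in> space MY" using sp[OF z] .
    have "(\<Sum>l\<in>insert (n+j) {..<n}. f (muD j z) (fst (z l)) (snd (z l))) = (\<Sum>l\<in>insert (n+j) {..<n}. fD (muD j z) (fst (z l)) (snd (z l)))"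
      using zz j by (intro sum.cong refl f_fD) auto
    moreover have "f (muD j z) (fst (z k)) (snd (z k)) = fD (muD j z) (fst (z k)) (snd (z k))"
      using zz k by (intro f_fD) auto
    moreover have "muj \<alpha> n m f g j z = muD j z" by (rule muj_muD[OF zz j])
    ultimately show ?thesis unfolding Psi_def by simp
  qed
  show ?thesis by (subst measurable_cong[OF B]) (assumption, rule A)
qed

end


theorem lemma3:
  fixes M :: "'a measure" and MX :: "'x measure" and MY :: "'y measure"
    and P :: "('x \<times> 'y) measure"
    and X :: "nat \<Rightarrow> 'a \<Rightarrow> 'x" and Y :: "nat \<Rightarrow> 'a \<Rightarrow> 'y"
    and f :: "ennreal \<Rightarrow> 'x \<Rightarrow> 'y \<Rightarrow> real" and g :: "ennreal \<Rightarrow> 'x \<Rightarrow> real"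
    and \<alpha> :: real and n m :: nat
  assumes "prob_space M"
    and "0 < \<alpha>" "\<alpha> < 1" and "0 < m"
    and f_meas: "\<And>\<mu>. (\<lambda>(x, y). f \<mu> x y) \<in> borel_measurable (MX \<Otimes>\<^sub>M MY)"
    and g_meas: "\<And>\<mu>. g \<mu> \<in> borel_measurable MX"
    and f_ind: "\<And>\<mu> x y. x \<in> space MX \<Longrightarrow> y \<in> space MY \<Longrightarrow> f \<mu> x y \<in> {0, 1}"
    and g_ind: "\<And>\<mu> x. x \<in> space MX \<Longrightarrow> g \<mu> x \<in> {0, 1}"
    and f_mono: "\<And>\<mu> \<nu> x y. x \<in> space MX \<Longrightarrow> y \<in> space MY \<Longrightarrow> \<mu> \<le> \<nu> \<Longrightarrow> \<nu> < \<infinity>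
                  \<Longrightarrow> f \<nu> x y \<le> f \<mu> x y"
    and f_le_g: "\<And>\<mu> x y. x \<in> space MX \<Longrightarrow> y \<in> space MY \<Longrightarrow> \<mu> < \<infinity> \<Longrightarrow> f \<mu> x y \<le> g \<mu> x"
    and f_rcont: "\<And>\<mu> x y. x \<in> space MX \<Longrightarrow> y \<in> space MY \<Longrightarrow> \<mu> < \<infinity>
                  \<Longrightarrow> ((\<lambda>\<nu>. f \<nu> x y) \<longlongrightarrow> f \<mu> x y) (at_right \<mu>)"
    and g_rcont: "\<And>\<mu> x. x \<in> space MX \<Longrightarrow> \<mu> < \<infinity>
                  \<Longrightarrow> ((\<lambda>\<nu>. g \<nu> x) \<longlongrightarrow> g \<mu> x) (at_right \<mu>)"
    and f_inf: "\<And>x y. x \<in> space MX \<Longrightarrow> y \<in> space MY \<Longrightarrow> f \<infinity> x y = 0"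
    and g_inf: "\<And>x. x \<in> space MX \<Longrightarrow> g \<infinity> x = 0"
    and indep: "prob_space.indep_vars M (\<lambda>_. MX \<Otimes>\<^sub>M MY) (\<lambda>i \<omega>. (X i \<omega>, Y i \<omega>)) {..<n + m}"
    and ident: "\<And>i. i < n + m \<Longrightarrow> distr M (MX \<Otimes>\<^sub>M MY) (\<lambda>\<omega>. (X i \<omega>, Y i \<omega>)) = P"
  shows "prob_space.expectation M
           (\<lambda>\<omega>. let \<mu> = mu_alpha \<alpha> n m f g (\<lambda>i. X i \<omega>) (\<lambda>i. Y i \<omega>) in
                 (\<Sum>i<m. f \<mu> (X (n + i) \<omega>) (Y (n + i) \<omega>)) / max 1 (\<Sum>i<m. g \<mu> (X (n + i) \<omega>)))
         \<le> \<alpha>"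
proof -
  interpret prob_space M by fact
  interpret S: setting MX MY f g \<alpha> n m
    by unfold_locales (use assms in auto)
  define I where "I = {..<n+m}"
  define N where "N = MX \<Otimes>\<^sub>M MY"
  define Zs where "Zs = (\<lambda>i \<omega>. (X i \<omega>, Y i \<omega>))"
  define Zv where "Zv = (\<lambda>\<omega>. \<lambda>i\<in>I. Zs i \<omega>)"
  define Q where "Q = Pi\<^sub>M I (\<lambda>_. P)"
  let ?PN = "Pi\<^sub>M {..<n+m} (\<lambda>_. MX \<Otimes>\<^sub>M MY)"
  let ?Psi = "Psi \<alpha> n m f g"
  have rv: "Zs i \<in> measurable M N" if "i \<in> I" for i
    using indep that unfolding indep_vars_def2 Zs_def N_def I_def by auto
  have I_ne: "I \<noteq> {}" using \<open>0 < m\<close> by (auto simp: I_def)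
  have distrZ: "distr M ?PN Zv = Q"
  proof -
    have "distr M (Pi\<^sub>M I (\<lambda>_. N)) Zv = Pi\<^sub>M I (\<lambda>i. distr M N (Zs i))"
      using indep_vars_iff_distr_eq_PiM'[OF I_ne rv] indep by (simp add: Zv_def Zs_def N_def I_def)
    also have "\<dots> = Q" unfolding Q_def by (intro PiM_cong) (auto simp: ident Zs_def N_def I_def)
    finally show ?thesis by (simp add: I_def N_def)
  qed
  have Pps: "prob_space P"
  proof -
    have "0 \<in> I" using \<open>0 < m\<close> by (simp add: I_def)
    then have "P = distr M N (Zs 0)" using ident[of 0] \<open>0 < m\<close> by (simp add: Zs_def N_def)
    then show ?thesis using prob_space_distr[OF rv[OF \<open>0 \<in> I\<close>]] by simp
  qed
  interpret Q: prob_space Q unfolding Q_def by (rule prob_space_PiM) (use Pps in auto)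
  have Zvm: "Zv \<in> measurable M ?PN" unfolding Zv_def I_def[symmetric] N_def[symmetric]
    by (rule measurable_restrict) (rule rv)
  have setsQ: "sets Q = sets ?PN" by (simp add: distrZ[symmetric])
  have spQ: "space Q = space ?PN" using sets_eq_imp_space_eq[OF setsQ] .
  have Psim: "?Psi j k \<in> borel_measurable ?PN" if "j < m" "k < n + m" for j k
    by (rule S.Psi_meas[OF f_meas g_meas that])
  have PsimQ: "?Psi j k \<in> borel_measurable Q" if "j < m" "k < n + m" for j k
    unfolding measurable_cong_sets[where N=borel and N'=borel, OF setsQ refl] by (rule Psim[OF that])
  have sp: "\<And>z i. z \<in> space ?PN \<Longrightarrow> i < n+m \<Longrightarrow> fst (z i) \<in> space MX \<and> snd (z i) \<in> space MY"
    by (auto simp: space_PiM space_pair_measure PiE_iff mem_Times_iff)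
  have intQ: "integrable Q (?Psi j k)" if j: "j < m" and k: "k \<in> insert (n+j) {..<n}" for j k
  proof (rule Q.integrable_const_bound[where B=1])
    show "AE x in Q. norm (?Psi j k x) \<le> 1"
    proof (rule AE_I2)
      fix x assume "x \<in> space Q"
      then have x: "x \<in> space ?PN" using spQ by simp
      have "0 \<le> ?Psi j k x \<and> ?Psi j k x \<le> 1"
        by (rule S.Psi_bound[OF _ j k]) (rule sp[OF x])
      then show "norm (?Psi j k x) \<le> 1" by simp
    qed
    show "?Psi j k \<in> borel_measurable Q" using PsimQ j k by auto
  qed
  have E_swap: "integral\<^sup>L Q (?Psi j (n+j)) = integral\<^sup>L Q (?Psi j k)" if j: "j < m" and k: "k < n" for j k
  proof -
    define \<sigma> where "\<sigma> = (\<lambda>i. if i = k then n + j else if i = n + j then k else i)"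
    define h :: "(nat \<Rightarrow> 'x \<times> 'y) \<Rightarrow> nat \<Rightarrow> 'x \<times> 'y" where "h = (\<lambda>z. \<lambda>i\<in>I. z (\<sigma> i))"
    have inj: "inj_on \<sigma> I" unfolding inj_on_def \<sigma>_def by auto
    have sI: "\<sigma> \<in> I \<rightarrow> I" using j k unfolding \<sigma>_def I_def by auto
    have dh: "distr Q Q h = Q"
      using distr_PiM_reindex[of I "\<lambda>_. P" \<sigma> I, OF Pps inj sI] unfolding Q_def h_def by simp
    have hm: "h \<in> measurable Q Q" unfolding h_def Q_def
      by (rule measurable_restrict) (use sI in \<open>auto intro!: measurable_component_singleton\<close>)
    have "integral\<^sup>L Q (?Psi j (n+j)) = integral\<^sup>L (distr Q Q h) (?Psi j (n+j))" by (simp add: dh)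
    also have "\<dots> = integral\<^sup>L Q (\<lambda>z. ?Psi j (n+j) (h z))"
      by (rule integral_distr[OF hm PsimQ]) (use j in auto)
    also have "\<dots> = integral\<^sup>L Q (?Psi j k)"
      unfolding h_def I_def \<sigma>_def by (rule Bochner_Integration.integral_cong[OF refl]) (rule S.Cj_swap(3)[OF k j])
    finally show ?thesis .
  qed
  have E_le: "integral\<^sup>L Q (?Psi j (n+j)) \<le> 1 / real (n+1)" if j: "j < m" for j
  proof -
    let ?T = "insert (n+j) {..<n}"
    have "real (n+1) * integral\<^sup>L Q (?Psi j (n+j)) = (\<Sum>k\<in>?T. integral\<^sup>L Q (?Psi j (n+j)))"
      by simp
    also have "\<dots> = (\<Sum>k\<in>?T. integral\<^sup>L Q (?Psi j k))"
      using E_swap[OF j] by (intro sum.cong) auto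
    also have "\<dots> = integral\<^sup>L Q (\<lambda>z. \<Sum>k\<in>?T. ?Psi j k z)"
      by (rule Bochner_Integration.integral_sum[symmetric]) (use intQ j in auto)
    also have "\<dots> \<le> integral\<^sup>L Q (\<lambda>_. 1)"
      by (rule integral_mono) (use intQ j S.Psi_sum_le in \<open>auto intro!: Bochner_Integration.integrable_sum\<close>)
    also have "\<dots> = 1" by (simp add: Q.prob_space)
    finally show ?thesis by (simp add: field_simps)
  qed
  have PsiZ: "?Psi j (n+j) (Zv \<omega>) = ?Psi j (n+j) (\<lambda>i. (X i \<omega>, Y i \<omega>))" if "j < m" for j \<omega>
    by (rule S.Psi_cong) (use that in \<open>auto simp: Zv_def I_def Zs_def\<close>)
  have E_M: "expectation (\<lambda>\<omega>. ?Psi j (n+j) (Zv \<omega>)) = integral\<^sup>L Q (?Psi j (n+j))" if j: "j < m" for j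
    using integral_distr[OF Zvm Psim, of j "n+j"] j distrZ by simp
  have int_M: "integrable M (\<lambda>\<omega>. ?Psi j (n+j) (Zv \<omega>))" if j: "j < m" for j
    using intQ[OF j, of "n+j"] integrable_distr_eq[OF Zvm Psim, of j "n+j"] j distrZ by simp
  define FDP where "FDP = (\<lambda>\<omega>. let \<mu> = mu_alpha \<alpha> n m f g (\<lambda>i. X i \<omega>) (\<lambda>i. Y i \<omega>) in
                 (\<Sum>i<m. f \<mu> (X (n + i) \<omega>) (Y (n + i) \<omega>)) / max 1 (\<Sum>i<m. g \<mu> (X (n + i) \<omega>)))"
  have pw: "FDP \<omega> \<le> \<alpha> * real (n+1) / real m * (\<Sum>j<m. ?Psi j (n+j) (Zv \<omega>))" if \<omega>: "\<omega> \<in> space M" for \<omega>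
  proof -
    have xy: "X i \<omega> \<in> space MX \<and> Y i \<omega> \<in> space MY" if "i < n + m" for i
      using measurable_space[OF rv \<omega>, of i] that by (auto simp: I_def N_def Zs_def space_pair_measure)
    have "FDP \<omega> = (\<Sum>j<m. f (mu_alpha \<alpha> n m f g (\<lambda>i. X i \<omega>) (\<lambda>i. Y i \<omega>)) (X (n + j) \<omega>) (Y (n + j) \<omega>) /
        max 1 (\<Sum>i<m. g (mu_alpha \<alpha> n m f g (\<lambda>i. X i \<omega>) (\<lambda>i. Y i \<omega>)) (X (n + i) \<omega>)))"
      unfolding FDP_def Let_def by (simp add: sum_divide_distrib)
    also have "\<dots> \<le> (\<Sum>j<m. \<alpha> * real (n+1) / real m * ?Psi j (n+j) (\<lambda>i. (X i \<omega>, Y i \<omega>)))"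
    proof (rule sum_mono)
      fix j assume "j \<in> {..<m}"
      then have j: "j < m" by simp
      show "f (mu_alpha \<alpha> n m f g (\<lambda>i. X i \<omega>) (\<lambda>i. Y i \<omega>)) (X (n + j) \<omega>) (Y (n + j) \<omega>) /
        max 1 (\<Sum>i<m. g (mu_alpha \<alpha> n m f g (\<lambda>i. X i \<omega>) (\<lambda>i. Y i \<omega>)) (X (n + i) \<omega>))
        \<le> \<alpha> * real (n+1) / real m * ?Psi j (n+j) (\<lambda>i. (X i \<omega>, Y i \<omega>))"
        using S.pointwise[of "\<lambda>i. X i \<omega>" "\<lambda>i. Y i \<omega>" j] xy j by simp
    qed
    also have "\<dots> = \<alpha> * real (n+1) / real m * (\<Sum>j<m. ?Psi j (n+j) (Zv \<omega>))"
      by (simp add: sum_distrib_left PsiZ)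
    finally show ?thesis .
  qed
  show ?thesis
  proof (cases "integrable M FDP")
    case False
    then show ?thesis using \<open>0 < \<alpha>\<close> by (simp add: not_integrable_integral_eq FDP_def)
  next
    case True
    have "expectation FDP \<le> expectation (\<lambda>\<omega>. \<alpha> * real (n+1) / real m * (\<Sum>j<m. ?Psi j (n+j) (Zv \<omega>)))"
    proof (rule integral_mono[OF True])
      show "integrable M (\<lambda>\<omega>. \<alpha> * real (n+1) / real m * (\<Sum>j<m. ?Psi j (n+j) (Zv \<omega>)))"
        by (intro Bochner_Integration.integrable_mult_right Bochner_Integration.integrable_sum int_M) auto
    qed (rule pw)
    also have "\<dots> = \<alpha> * real (n+1) / real m * (\<Sum>j<m. expectation (\<lambda>\<omega>. ?Psi j (n+j) (Zv \<omega>)))"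
      using int_M by (simp add: Bochner_Integration.integral_sum)
    also have "\<dots> \<le> \<alpha> * real (n+1) / real m * (\<Sum>j<m. 1 / real (n+1))"
      using \<open>0 < \<alpha>\<close> E_M E_le by (intro mult_left_mono sum_mono) auto
    also have "\<dots> = \<alpha>" using \<open>0 < m\<close> by simp
    finally show ?thesis by (simp add: FDP_def)
  qed
qed


end
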